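(* Let $(X,\operatorname{d})$ be a bounded, complete metric space with a convex-like structure, and let $\mathfrak F=\{x_1,\dots,x_n\}\subset X$ be finite. Then $\operatorname{plane}(\mathfrak F)$ is $\sigma$-compact (hence separable).
   Context: Let $\operatorname{Prob}_n$ denote the set of probability measures on $\{1,\dots,n\}$ with the $\ell^1$-metric, and $X^{(n)}$ the $n$-fold product. A bounded metric space $(X,\operatorname{d})$ has a \emph{convex-like structure} if for every $n$ and $\mu\in\operatorname{Prob}_n$ there is a continuous map $\gamma_\mu\colon X^{(n)}\to X$ satisfying: (1) $\gamma_\mu(x_1,\dots,x_n)=\gamma_{\mu\circ\sigma}(x_{\sigma(1)},\dots,x_{\sigma(n)})$ for all $\sigma\in S_n$; (2) if $x_1=x_2$ then $\gamma_\mu(x_1,x_2,\dots,x_n)=\gamma_{\tilde\mu}(x_1,x_3,\dots,x_n)$ with $\tilde\mu(1)=\mu(1)+\mu(2)$, $\tilde\mu(j)=\mu(j+1)$ ($2\le j\le n-1$), and $\operatorname{Prob}_1$ gives the identity; (3) $\mu(i)=1$ implies $\gamma_\mu(x_1,\dots,x_n)=x_i$; (4) for a constant $C$, $\operatorname{d}(\gamma_\mu(\vec x),\gamma_{\tilde\mu}(\vec x))\le C\|\mu-\tilde\mu\|$ and $\operatorname{d}(\gamma_\mu(\vec x),\gamma_\mu(\vec y))\le\sum_i\mu(i)\operatorname{d}(x_i,y_i)$; (5) $\gamma_\nu(\gamma_\mu(x_1,\dots,x_n),\gamma_{\tilde\mu}(\tilde x_1,\dots,\tilde x_m))=\gamma_\eta(x_1,\dots,x_n,\tilde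 x_1,\dots,\tilde x_m)$ for $\nu\in\operatorname{Prob}_2$, where $\eta(i)=\nu(1)\mu(i)$, $\eta(n+j)=\nu(2)\tilde\mu(j)$. One writes $t_1x_1+\dots+t_nx_n:=\gamma_\mu(x_1,\dots,x_n)$ where $\mu(i)=t_i$. The convex hull is $\operatorname{conv}(\mathfrak F)=\{\sum_i\mu(i)x_i:\mu\in\operatorname{Prob}_n\}$, and the plane generated by $\mathfrak F$ is $\operatorname{plane}(\mathfrak F)=\{x\in X:\exists\, y,z\in\operatorname{conv}(\mathfrak F),\ 0<t\le1 \text{ with } tx+(1-t)y=z\}$. *)

theory Defs
  imports "HOL-Analysis.Analysis" "HOL-Combinatorics.Permutations"
begin

text \<open>Indices are 0-based: the paper's index set {1..n} is rendered as {..<n}.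
  Points of X^(n) are extensional functions in PiE {..<n} (\<lambda>_. X) (undefined outside),
  probability vectors in Prob_n are functions nat => real vanishing outside {..<n}.\<close>

definition Prob :: "nat \<Rightarrow> (nat \<Rightarrow> real) set" where
  "Prob n = {\<mu>. (\<forall>i<n. 0 \<le> \<mu> i) \<and> (\<forall>i\<ge>n. \<mu> i = 0) \<and> (\<Sum>i<n. \<mu> i) = 1}"

definition Xpow :: "'a set \<Rightarrow> nat \<Rightarrow> (nat \<Rightarrow> 'a) set" where
  "Xpow X n = PiE {..<n} (\<lambda>_. X)"

definition l1dist :: "nat \<Rightarrow> (nat \<Rightarrow> real) \<Rightarrow> (nat \<Rightarrow> real) \<Rightarrow> real" where
  "l1dist n \<mu> \<nu> = (\<Sum>i<n. \<bar>\<mu> i - \<nu> i\<bar>)"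

definition pair2 :: "'a \<Rightarrow> 'a \<Rightarrow> nat \<Rightarrow> 'a" where
  "pair2 a b = restrict (\<lambda>i. if i = 0 then a else b) {..<2}"

definition prob2 :: "real \<Rightarrow> real \<Rightarrow> nat \<Rightarrow> real" where
  "prob2 s t = (\<lambda>i. if i = 0 then s else if i = 1 then t else 0)"

definition merge_pt :: "nat \<Rightarrow> (nat \<Rightarrow> 'a) \<Rightarrow> nat \<Rightarrow> 'a" where
  "merge_pt n x = restrict (\<lambda>j. if j = 0 then x 0 else x (Suc j)) {..<n - 1}"

definition merge_prob :: "nat \<Rightarrow> (nat \<Rightarrow> real) \<Rightarrow> nat \<Rightarrow> real" where
  "merge_prob n \<mu> = (\<lambda>j. if j = 0 then \<mu> 0 + \<mu> 1 else if j < n - 1 then \<mu> (Suc j) else 0)"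

definition concat_pt :: "nat \<Rightarrow> nat \<Rightarrow> (nat \<Rightarrow> 'a) \<Rightarrow> (nat \<Rightarrow> 'a) \<Rightarrow> nat \<Rightarrow> 'a" where
  "concat_pt n m x y = restrict (\<lambda>i. if i < n then x i else y (i - n)) {..<n + m}"

definition concat_prob :: "nat \<Rightarrow> nat \<Rightarrow> (nat \<Rightarrow> real) \<Rightarrow> (nat \<Rightarrow> real) \<Rightarrow> (nat \<Rightarrow> real) \<Rightarrow> nat \<Rightarrow> real" where
  "concat_prob n m \<nu> \<mu> \<mu>' = (\<lambda>i. if i < n then \<nu> 0 * \<mu> i
                                  else if i < n + m then \<nu> 1 * \<mu>' (i - n) else 0)"

text \<open>gamma n \<mu> x stands for gamma_\<mu>(x_1,...,x_n).\<close>
definition convex_like ::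
  "('a::metric_space) set \<Rightarrow> (nat \<Rightarrow> (nat \<Rightarrow> real) \<Rightarrow> (nat \<Rightarrow> 'a) \<Rightarrow> 'a) \<Rightarrow> bool" where
  "convex_like X gamma \<longleftrightarrow>
     bounded X \<and>
     (\<forall>n. \<forall>\<mu>\<in>Prob n. (\<forall>x\<in>Xpow X n. gamma n \<mu> x \<in> X) \<and> continuous_on (Xpow X n) (gamma n \<mu>)) \<and>
     \<comment> \<open>(1)\<close>
     (\<forall>n. \<forall>\<mu>\<in>Prob n. \<forall>x\<in>Xpow X n. \<forall>\<sigma>. \<sigma> permutes {..<n} \<longrightarrow>
         gamma n \<mu> x = gamma n (\<mu> \<circ> \<sigma>) (x \<circ> \<sigma>)) \<and>
     \<comment> \<open>(2)\<close>
     (\<forall>n\<ge>2. \<forall>\<mu>\<in>Prob n. \<forall>x\<in>Xpow X n. x 0 = x 1 \<longrightarrow>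
         gamma n \<mu> x = gamma (n - 1) (merge_prob n \<mu>) (merge_pt n x)) \<and>
     (\<forall>\<mu>\<in>Prob 1. \<forall>x\<in>Xpow X 1. gamma 1 \<mu> x = x 0) \<and>
     \<comment> \<open>(3)\<close>
     (\<forall>n. \<forall>\<mu>\<in>Prob n. \<forall>x\<in>Xpow X n. \<forall>i<n. \<mu> i = 1 \<longrightarrow> gamma n \<mu> x = x i) \<and>
     \<comment> \<open>(4)\<close>
     (\<exists>C. \<forall>n. \<forall>\<mu>\<in>Prob n. \<forall>\<mu>'\<in>Prob n. \<forall>x\<in>Xpow X n.
         dist (gamma n \<mu> x) (gamma n \<mu>' x) \<le> C * l1dist n \<mu> \<mu>') \<and>
     (\<forall>n. \<forall>\<mu>\<in>Prob n. \<forall>x\<in>Xpow X n. \<forall>y\<in>Xpow X n.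
         dist (gamma n \<mu> x) (gamma n \<mu> y) \<le> (\<Sum>i<n. \<mu> i * dist (x i) (y i))) \<and>
     \<comment> \<open>(5)\<close>
     (\<forall>n m. \<forall>\<nu>\<in>Prob 2. \<forall>\<mu>\<in>Prob n. \<forall>\<mu>'\<in>Prob m. \<forall>x\<in>Xpow X n. \<forall>y\<in>Xpow X m.
         gamma 2 \<nu> (pair2 (gamma n \<mu> x) (gamma m \<mu>' y))
           = gamma (n + m) (concat_prob n m \<nu> \<mu> \<mu>') (concat_pt n m x y))"

text \<open>conv(F) for F = {x_0,...,x_(n-1)} given by xs.\<close>
definition cl_conv :: "(nat \<Rightarrow> (nat \<Rightarrow> real) \<Rightarrow> (nat \<Rightarrow> 'a) \<Rightarrow> 'a) \<Rightarrow> nat \<Rightarrow> (nat \<Rightarrow> 'a) \<Rightarrow> 'a set" where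
  "cl_conv gamma n xs = {gamma n \<mu> xs | \<mu>. \<mu> \<in> Prob n}"

definition cl_plane :: "'a set \<Rightarrow> (nat \<Rightarrow> (nat \<Rightarrow> real) \<Rightarrow> (nat \<Rightarrow> 'a) \<Rightarrow> 'a) \<Rightarrow> nat \<Rightarrow> (nat \<Rightarrow> 'a) \<Rightarrow> 'a set" where
  "cl_plane X gamma n xs = {x \<in> X. \<exists>y\<in>cl_conv gamma n xs. \<exists>z\<in>cl_conv gamma n xs. \<exists>t::real.
       0 < t \<and> t \<le> 1 \<and> gamma 2 (prob2 t (1 - t)) (pair2 x y) = z}"

definition sigma_compact :: "'a::topological_space set \<Rightarrow> bool" where
  "sigma_compact S \<longleftrightarrow> (\<exists>K :: nat \<Rightarrow> 'a set. (\<forall>k. compact (K k)) \<and> S = (\<Union>k. K k))"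

end

theory Submission
  imports Defs
begin


definition vec3 :: "'a \<Rightarrow> 'a \<Rightarrow> 'a \<Rightarrow> nat \<Rightarrow> 'a" where
  "vec3 a b c = restrict (\<lambda>i. if i = 0 then a else if i = 1 then b else c) {..<3}"
definition prob3 :: "real \<Rightarrow> real \<Rightarrow> real \<Rightarrow> nat \<Rightarrow> real" where
  "prob3 a b c = (\<lambda>i. if i = 0 then a else if i = 1 then b else if i = 2 then c else 0)"
definition vec4 :: "'a \<Rightarrow> 'a \<Rightarrow> 'a \<Rightarrow> 'a \<Rightarrow> nat \<Rightarrow> 'a" where
  "vec4 a b c d = restrict (\<lambda>i. if i = 0 then a else if i = 1 then b else if i = 2 then c else d) {..<4}"
definition prob4 :: "real \<Rightarrow> real \<Rightarrow> real \<Rightarrow> real \<Rightarrow> nat \<Rightarrow> real" where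
  "prob4 a b c d = (\<lambda>i. if i = 0 then a else if i = 1 then b else if i = 2 then c else if i = 3 then d else 0)"

lemma lessThan2: "{..<2::nat} = {0,1}" by auto
lemma lessThan3: "{..<3::nat} = {0,1,2}" by auto
lemma lessThan4: "{..<4::nat} = {0,1,2,3}" by auto

lemma prob2_in: "0 \<le> s \<Longrightarrow> 0 \<le> t \<Longrightarrow> s + t = 1 \<Longrightarrow> prob2 s t \<in> Prob 2"
  by (auto simp: Prob_def prob2_def lessThan2)
lemma prob3_in: "0 \<le> a \<Longrightarrow> 0 \<le> b \<Longrightarrow> 0 \<le> c \<Longrightarrow> a + b + c = 1 \<Longrightarrow> prob3 a b c \<in> Prob 3"
  by (auto simp: Prob_def prob3_def lessThan3)
lemma prob4_in: "0 \<le> a \<Longrightarrow> 0 \<le> b \<Longrightarrow> 0 \<le> c \<Longrightarrow> 0 \<le> d \<Longrightarrow> a + b + c + d = 1 \<Longrightarrow> prob4 a b c d \<in> Prob 4"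
  by (auto simp: Prob_def prob4_def lessThan4)
lemma pair2_in: "a \<in> X \<Longrightarrow> b \<in> X \<Longrightarrow> pair2 a b \<in> Xpow X 2"
  by (auto simp: Xpow_def pair2_def PiE_def extensional_def)
lemma vec3_in: "a \<in> X \<Longrightarrow> b \<in> X \<Longrightarrow> c \<in> X \<Longrightarrow> vec3 a b c \<in> Xpow X 3"
  by (auto simp: Xpow_def vec3_def PiE_def extensional_def)
lemma vec4_in: "a \<in> X \<Longrightarrow> b \<in> X \<Longrightarrow> c \<in> X \<Longrightarrow> d \<in> X \<Longrightarrow> vec4 a b c d \<in> Xpow X 4"
  by (auto simp: Xpow_def vec4_def PiE_def extensional_def)

lemma concat22_prob: "concat_prob 2 2 (prob2 s (1-s)) (prob2 a (1-a)) (prob2 b (1-b))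
   = prob4 (s*a) (s*(1-a)) ((1-s)*b) ((1-s)*(1-b))"
  by (auto simp: fun_eq_iff concat_prob_def prob2_def prob4_def)
lemma concat22_pt: "concat_pt 2 2 (pair2 a b) (pair2 c d) = vec4 a b c d"
  by (auto simp: fun_eq_iff concat_pt_def pair2_def vec4_def)
lemma perm4_prob: "prob4 a b c d \<circ> Transposition.transpose 1 2 = prob4 a c b d"
  by (auto simp: fun_eq_iff prob4_def Transposition.transpose_def)
lemma perm4_pt: "vec4 a b c d \<circ> Transposition.transpose 1 2 = vec4 a c b d"
  by (auto simp: fun_eq_iff vec4_def Transposition.transpose_def)
lemma merge4_prob: "merge_prob 4 (prob4 a b c d) = prob3 (a+b) c d"
  by (auto simp: fun_eq_iff merge_prob_def prob4_def prob3_def)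
lemma merge4_pt: "merge_pt 4 (vec4 a b c d) = vec3 a c d"
  by (auto simp: fun_eq_iff merge_pt_def vec4_def vec3_def)
lemma perm2_prob: "prob2 s t \<circ> Transposition.transpose 0 1 = prob2 t s"
  by (auto simp: fun_eq_iff prob2_def Transposition.transpose_def)
lemma perm2_pt: "pair2 a b \<circ> Transposition.transpose 0 1 = pair2 b a"
  by (auto simp: fun_eq_iff pair2_def Transposition.transpose_def)
lemma perm3_prob: "prob3 a b c \<circ> Transposition.transpose 0 2 = prob3 c b a"
  by (auto simp: fun_eq_iff prob3_def Transposition.transpose_def)
lemma perm3_pt: "vec3 a b c \<circ> Transposition.transpose 0 2 = vec3 c b a"
  by (auto simp: fun_eq_iff vec3_def Transposition.transpose_def)

context
  fixes X :: "'a::metric_space set" and gamma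
  assumes cl: "convex_like X gamma"
begin

lemma ax_in: "\<mu> \<in> Prob n \<Longrightarrow> x \<in> Xpow X n \<Longrightarrow> gamma n \<mu> x \<in> X"
  using cl unfolding convex_like_def apply (elim conjE) by blast
lemma ax_perm: "\<mu> \<in> Prob n \<Longrightarrow> x \<in> Xpow X n \<Longrightarrow> \<sigma> permutes {..<n} \<Longrightarrow>
   gamma n \<mu> x = gamma n (\<mu> \<circ> \<sigma>) (x \<circ> \<sigma>)"
  using cl unfolding convex_like_def apply (elim conjE) by blast
lemma ax_merge: "2 \<le> n \<Longrightarrow> \<mu> \<in> Prob n \<Longrightarrow> x \<in> Xpow X n \<Longrightarrow> x 0 = x 1 \<Longrightarrow>
   gamma n \<mu> x = gamma (n - 1) (merge_prob n \<mu>) (merge_pt n x)"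
  using cl unfolding convex_like_def apply (elim conjE) by blast
lemma ax_unit: "\<mu> \<in> Prob n \<Longrightarrow> x \<in> Xpow X n \<Longrightarrow> i < n \<Longrightarrow> \<mu> i = 1 \<Longrightarrow> gamma n \<mu> x = x i"
  using cl unfolding convex_like_def apply (elim conjE) by blast
lemma ax_lip2: "\<mu> \<in> Prob n \<Longrightarrow> x \<in> Xpow X n \<Longrightarrow> y \<in> Xpow X n \<Longrightarrow>
   dist (gamma n \<mu> x) (gamma n \<mu> y) \<le> (\<Sum>i<n. \<mu> i * dist (x i) (y i))"
  using cl[unfolded convex_like_def, THEN conjunct2, THEN conjunct2, THEN conjunct2, THEN conjunct2,
    THEN conjunct2, THEN conjunct2, THEN conjunct2, THEN conjunct1] by blast
lemma ax_concat: "\<nu> \<in> Prob 2 \<Longrightarrow> \<mu> \<in> Prob n \<Longrightarrow> \<mu>' \<in> Prob m \<Longrightarrow> x \<in> Xpow X n \<Longrightarrow> y \<in> Xpow X m \<Longrightarrow>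
         gamma 2 \<nu> (pair2 (gamma n \<mu> x) (gamma m \<mu>' y))
           = gamma (n + m) (concat_prob n m \<nu> \<mu> \<mu>') (concat_pt n m x y)"
  using cl[unfolded convex_like_def, THEN conjunct2, THEN conjunct2, THEN conjunct2, THEN conjunct2,
    THEN conjunct2, THEN conjunct2, THEN conjunct2, THEN conjunct2] by blast
lemma ax_C: obtains C where "C \<ge> 0" "\<And>n \<mu> \<mu>' x. \<mu> \<in> Prob n \<Longrightarrow> \<mu>' \<in> Prob n \<Longrightarrow> x \<in> Xpow X n \<Longrightarrow>
         dist (gamma n \<mu> x) (gamma n \<mu>' x) \<le> C * l1dist n \<mu> \<mu>'"
proof -
  obtain C where C: "\<And>n \<mu> \<mu>' x. \<mu> \<in> Prob n \<Longrightarrow> \<mu>' \<in> Prob n \<Longrightarrow> x \<in> Xpow X n \<Longrightarrow>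
         dist (gamma n \<mu> x) (gamma n \<mu>' x) \<le> C * l1dist n \<mu> \<mu>'"
    using cl[unfolded convex_like_def, THEN conjunct2, THEN conjunct2, THEN conjunct2, THEN conjunct2,
    THEN conjunct2, THEN conjunct2, THEN conjunct1] by blast
  have l: "l1dist n \<mu> \<mu>' \<ge> 0" for n \<mu> \<mu>' unfolding l1dist_def by (simp add: sum_nonneg)
  show ?thesis
    apply (rule that[of "max C 0"]) apply simp
    by (rule order_trans[OF C]) (auto intro: mult_right_mono l)
qed


lemma comb_a:
  assumes "u \<in> X" "v \<in> X" "w \<in> X" "0 \<le> th" "th \<le> 1" "0 \<le> l" "l \<le> 1" "0 \<le> p" "p \<le> 1"
  shows "gamma 2 (prob2 th (1-th)) (pair2 (gamma 2 (prob2 l (1-l)) (pair2 u v)) (gamma 2 (prob2 p (1-p)) (pair2 u w)))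
     = gamma 3 (prob3 (th*l+(1-th)*p) (th*(1-l)) ((1-th)*(1-p))) (vec3 u v w)"
proof -
  have P4: "prob4 (th*l) (th*(1-l)) ((1-th)*p) ((1-th)*(1-p)) \<in> Prob 4"
    using assms by (intro prob4_in mult_nonneg_nonneg) (auto simp: algebra_simps)
  have P4': "prob4 (th*l) ((1-th)*p) (th*(1-l)) ((1-th)*(1-p)) \<in> Prob 4"
    using assms by (intro prob4_in mult_nonneg_nonneg) (auto simp: algebra_simps)
  have e1: "gamma 2 (prob2 th (1-th)) (pair2 (gamma 2 (prob2 l (1-l)) (pair2 u v)) (gamma 2 (prob2 p (1-p)) (pair2 u w)))
     = gamma (2+2) (prob4 (th*l) (th*(1-l)) ((1-th)*p) ((1-th)*(1-p))) (vec4 u v u w)"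
    using ax_concat[of "prob2 th (1-th)" "prob2 l (1-l)" 2 "prob2 p (1-p)" 2 "pair2 u v" "pair2 u w"] assms
    by (simp add: prob2_in pair2_in concat22_prob concat22_pt)
  have e2: "gamma 4 (prob4 (th*l) (th*(1-l)) ((1-th)*p) ((1-th)*(1-p))) (vec4 u v u w) = gamma 4 (prob4 (th*l) ((1-th)*p) (th*(1-l)) ((1-th)*(1-p))) (vec4 u u v w)"
    using ax_perm[OF P4 vec4_in[OF assms(1,2,1,3)], of "Transposition.transpose 1 2", unfolded perm4_prob perm4_pt]
    by (simp add: permutes_swap_id)
  have e3: "gamma 4 (prob4 (th*l) ((1-th)*p) (th*(1-l)) ((1-th)*(1-p))) (vec4 u u v w) = gamma 3 (prob3 (th*l+(1-th)*p) (th*(1-l)) ((1-th)*(1-p))) (vec3 u v w)"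
  proof -
    have "vec4 u u v w 0 = vec4 u u v w 1" by (simp add: vec4_def)
    from ax_merge[OF _ P4' vec4_in[OF assms(1,1,2,3)] this] show ?thesis
      by (simp add: merge4_prob merge4_pt)
  qed
  show ?thesis using e1 e2 e3 by simp
qed

lemma comb_b:
  assumes "x \<in> X" "y \<in> X" "z \<in> X" "0 \<le> th" "th \<le> 1" "0 \<le> l" "l \<le> 1" "0 \<le> p" "p \<le> 1"
  shows "gamma 2 (prob2 th (1-th)) (pair2 (gamma 2 (prob2 l (1-l)) (pair2 y z)) (gamma 2 (prob2 p (1-p)) (pair2 x y)))
     = gamma 3 (prob3 ((1-th)*p) (th*(1-l)) (th*l+(1-th)*(1-p))) (vec3 x z y)"
proof -
  have P2: "prob2 p (1-p) \<in> Prob 2" using assms by (intro prob2_in) auto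
  have sw: "gamma 2 (prob2 p (1-p)) (pair2 x y) = gamma 2 (prob2 (1-p) (1-(1-p))) (pair2 y x)"
    using ax_perm[OF P2 pair2_in[OF assms(1,2)], of "Transposition.transpose 0 1", unfolded perm2_prob perm2_pt]
    by (simp add: permutes_swap_id)
  have e1: "gamma 2 (prob2 th (1-th)) (pair2 (gamma 2 (prob2 l (1-l)) (pair2 y z)) (gamma 2 (prob2 p (1-p)) (pair2 x y)))
     = gamma 3 (prob3 (th*l+(1-th)*(1-p)) (th*(1-l)) ((1-th)*(1-(1-p)))) (vec3 y z x)"
    unfolding sw using assms by (intro comb_a) auto
  have P3: "prob3 (th*l+(1-th)*(1-p)) (th*(1-l)) ((1-th)*(1-(1-p))) \<in> Prob 3"
    using assms by (intro prob3_in add_nonneg_nonneg mult_nonneg_nonneg) (auto simp: algebra_simps)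
  have e2: "gamma 3 (prob3 (th*l+(1-th)*(1-p)) (th*(1-l)) ((1-th)*(1-(1-p)))) (vec3 y z x) = gamma 3 (prob3 ((1-th)*(1-(1-p))) (th*(1-l)) (th*l+(1-th)*(1-p))) (vec3 x z y)"
    using ax_perm[OF P3 vec3_in[OF assms(2,3,1)], of "Transposition.transpose 0 2", unfolded perm3_prob perm3_pt]
    by (simp add: permutes_swap_id)
  show ?thesis using e1 e2 by simp
qed

lemma l1_prob3: "l1dist 3 (prob3 a b c) (prob3 a' b' c') = \<bar>a-a'\<bar> + \<bar>b-b'\<bar> + \<bar>c-c'\<bar>"
  by (simp add: l1dist_def lessThan3 prob3_def)

lemma cancel_N:
  fixes N :: nat and l C :: real
  assumes xyz: "x \<in> X" "y \<in> X" "z \<in> X" and l: "0 < l" "l \<le> 1" and N: "2 \<le> N"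
    and C: "C \<ge> 0" "\<And>n \<mu> \<mu>' x. \<mu> \<in> Prob n \<Longrightarrow> \<mu>' \<in> Prob n \<Longrightarrow> x \<in> Xpow X n \<Longrightarrow>
         dist (gamma n \<mu> x) (gamma n \<mu>' x) \<le> C * l1dist n \<mu> \<mu>'"
  shows "dist x y \<le> 4 * C / (l * N) + dist (gamma 2 (prob2 l (1-l)) (pair2 x z)) (gamma 2 (prob2 l (1-l)) (pair2 y z)) / l"
proof -
  define a where "a = gamma 2 (prob2 l (1-l)) (pair2 x z)"
  define b where "b = gamma 2 (prob2 l (1-l)) (pair2 y z)"
  define D where "D = dist a b"
  define th where "th = 1 / (l * N + 1 - l)"
  define ep where "ep = th * (1 - l)"
  have "l * 2 \<le> l * N" using N l by (intro mult_left_mono) auto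
  then have den: "l * N + 1 - l \<ge> 1 + l" by linarith
  have dpos: "l * N + 1 - l > 1" using den l by linarith
  have th_pos: "0 < th" and th_lt: "th < 1" using dpos unfolding th_def by (auto simp: divide_simps)
  have th_eq: "th * (l * (real N - 1) + 1) = 1"
  proof -
    have "l * (real N - 1) + 1 = l * N + 1 - l" by (simp add: algebra_simps)
    then show ?thesis unfolding th_def using dpos by simp
  qed
  have Nlth: "real N * l * th = 1 - ep"
    using th_eq unfolding ep_def by (simp add: algebra_simps)
  have a_in: "a \<in> X" unfolding a_def using l xyz by (intro ax_in prob2_in pair2_in) auto
  have b_in: "b \<in> X" unfolding b_def using l xyz by (intro ax_in prob2_in pair2_in) auto
  define P where "P k = gamma 3 (prob3 (real k * l * th) ep (1 - ep - real k * l * th)) (vec3 x z y)" for k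
  have step: "dist (P k) (P (Suc k)) \<le> th * D" if k: "k < N" for k
  proof -
    define p where "p = real k * l * th / (1 - th)"
    have kle: "real k \<le> real N - 1" using k by linarith
    have p0: "0 \<le> p" unfolding p_def using th_pos th_lt l by auto
    have "real k * l * th \<le> (real N - 1) * l * th"
      using kle l th_pos by (intro mult_right_mono) auto
    also have "\<dots> = 1 - th" using th_eq by (simp add: algebra_simps)
    finally have p1: "p \<le> 1" unfolding p_def using th_lt by simp
    have pth: "(1 - th) * p = real k * l * th" unfolding p_def using th_lt by simp
    define W where "W = gamma 2 (prob2 p (1-p)) (pair2 x y)"
    have W_in: "W \<in> X" unfolding W_def using p0 p1 xyz by (intro ax_in prob2_in pair2_in) auto
    have "gamma 2 (prob2 th (1-th)) (pair2 a W) = gamma 3 (prob3 (th*l+(1-th)*p) (th*(1-l)) ((1-th)*(1-p))) (vec3 x z y)"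
      unfolding a_def W_def using xyz th_pos th_lt l p0 p1 by (intro comb_a) auto
    also have "\<dots> = P (Suc k)"
    proof -
      have A1: "th*l+(1-th)*p = real (Suc k) * l * th" using pth by (simp add: algebra_simps)
      have A3: "(1-th)*(1-p) = 1 - th*(1-l) - real (Suc k)*l*th" using pth by (simp add: algebra_simps)
      show ?thesis unfolding P_def ep_def A1 A3 ..
    qed
    finally have ea: "gamma 2 (prob2 th (1-th)) (pair2 a W) = P (Suc k)" .
    have "gamma 2 (prob2 th (1-th)) (pair2 b W) = gamma 3 (prob3 ((1-th)*p) (th*(1-l)) (th*l+(1-th)*(1-p))) (vec3 x z y)"
      unfolding b_def W_def using xyz th_pos th_lt l p0 p1 by (intro comb_b) auto
    also have "\<dots> = P k"
    proof -
      have B3: "th*l+(1-th)*(1-p) = 1 - th*(1-l) - real k*l*th" using pth by (simp add: algebra_simps)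
      show ?thesis unfolding P_def ep_def B3 pth ..
    qed
    finally have eb: "gamma 2 (prob2 th (1-th)) (pair2 b W) = P k" .
    have "dist (P k) (P (Suc k)) \<le> (\<Sum>i<2. prob2 th (1-th) i * dist (pair2 b W i) (pair2 a W i))"
      unfolding ea[symmetric] eb[symmetric] using th_pos th_lt a_in b_in W_in
      by (intro ax_lip2 prob2_in pair2_in) auto
    also have "\<dots> = th * D" by (simp add: lessThan2 prob2_def pair2_def D_def dist_commute)
    finally show ?thesis .
  qed
  have tele: "m \<le> N \<Longrightarrow> dist (P 0) (P m) \<le> real m * th * D" for m
  proof (induction m)
    case 0 then show ?case by simp
  next
    case (Suc m)
    have "dist (P 0) (P (Suc m)) \<le> dist (P 0) (P m) + dist (P m) (P (Suc m))" by (rule dist_triangle)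
    also have "\<dots> \<le> real m * th * D + th * D" using Suc step by (intro add_mono) auto
    finally show ?case by (simp add: algebra_simps)
  qed
  have ep0: "0 \<le> ep" unfolding ep_def using th_pos l by auto
  have ep1: "ep \<le> th" unfolding ep_def using th_pos l by (simp add: mult_left_le)
  have Ny: "y = gamma 3 (prob3 0 0 1) (vec3 x z y)"
    using ax_unit[OF prob3_in vec3_in[OF xyz(1,3,2)], of 0 0 1 2] by (simp add: vec3_def prob3_def)
  have Nx: "x = gamma 3 (prob3 1 0 0) (vec3 x z y)"
    using ax_unit[OF prob3_in vec3_in[OF xyz(1,3,2)], of 1 0 0 0] by (simp add: vec3_def prob3_def)
  have d0: "dist (P 0) y \<le> C * (2 * ep)"
  proof -
    have "dist (P 0) (gamma 3 (prob3 0 0 1) (vec3 x z y)) \<le> C * l1dist 3 (prob3 0 ep (1 - ep)) (prob3 0 0 1)"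
      unfolding P_def
      using C(2)[OF prob3_in prob3_in vec3_in[OF xyz(1,3,2)]] ep0 ep1 th_lt by simp
    then have "dist (P 0) y \<le> C * l1dist 3 (prob3 0 ep (1 - ep)) (prob3 0 0 1)"
      unfolding Ny[symmetric] .
    then show ?thesis by (simp add: l1_prob3 ep0)
  qed
  have dN: "dist x (P N) \<le> C * (2 * ep)"
  proof -
    have PN: "P N = gamma 3 (prob3 (1 - ep) ep 0) (vec3 x z y)" unfolding P_def Nlth by simp
    have "dist (gamma 3 (prob3 1 0 0) (vec3 x z y)) (P N) \<le> C * l1dist 3 (prob3 1 0 0) (prob3 (1-ep) ep 0)"
      unfolding PN
      using C(2)[OF prob3_in prob3_in vec3_in[OF xyz(1,3,2)]] ep0 ep1 th_lt by simp
    then have "dist x (P N) \<le> C * l1dist 3 (prob3 1 0 0) (prob3 (1-ep) ep 0)"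
      unfolding Nx[symmetric] .
    then show ?thesis by (simp add: l1_prob3 ep0)
  qed
  have "dist x y \<le> dist x (P N) + dist (P N) (P 0) + dist (P 0) y"
    using dist_triangle[of x y "P N"] dist_triangle[of "P N" y "P 0"] by linarith
  also have "\<dots> \<le> C * (2 * ep) + real N * th * D + C * (2 * ep)"
    using dN d0 tele[of N] by (simp add: dist_commute)
  finally have main: "dist x y \<le> 4 * C * ep + real N * th * D" by simp
  have "ep \<le> 1 / (l * N)"
  proof -
    have "ep \<le> th" by (rule ep1)
    also have "th \<le> 1 / (l * N)"
    proof -
      have lN: "0 < l * real N" using l N by simp
      show ?thesis unfolding th_def by (intro divide_left_mono mult_pos_pos) (use lN l dpos N in \<open>simp_all; linarith\<close>)+
    qed
    finally show ?thesis .
  qed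
  then have "4 * C * ep \<le> 4 * C * (1 / (l * N))" using C(1) by (intro mult_left_mono) auto
  moreover have "real N * th * D \<le> D / l"
  proof -
    have lt: "l < l*real N + 1" using dpos by linarith
    have e: "real N * th * l = (l*N)/(l*N+1-l)" unfolding th_def using lt by (simp add: algebra_simps)
    have dp: "0 < l*N+1-l" using dpos by linarith
    have "(l*N)/(l*N+1-l) \<le> 1" unfolding pos_divide_le_eq[OF dp] using l by simp
    then have "real N * th * l \<le> 1" using e by simp
    then have "real N * th \<le> 1 / l" using l by (simp add: divide_simps algebra_simps)
    from mult_right_mono[OF this zero_le_dist[of a b]] show ?thesis using D_def by simp
  qed
  moreover have "4*C*(1/(l*N)) = 4*C/(l*N)" by simp
  ultimately show ?thesis using main unfolding D_def a_def b_def by linarith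
qed

lemma cancel:
  assumes xyz: "x \<in> X" "y \<in> X" "z \<in> X" and l: "0 < l" "l \<le> 1"
  shows "l * dist x y \<le> dist (gamma 2 (prob2 l (1-l)) (pair2 x z)) (gamma 2 (prob2 l (1-l)) (pair2 y z))"
proof -
  obtain C where C: "C \<ge> 0" "\<And>n \<mu> \<mu>' x. \<mu> \<in> Prob n \<Longrightarrow> \<mu>' \<in> Prob n \<Longrightarrow> x \<in> Xpow X n \<Longrightarrow>
         dist (gamma n \<mu> x) (gamma n \<mu>' x) \<le> C * l1dist n \<mu> \<mu>'" using ax_C by blast
  define D where "D = dist (gamma 2 (prob2 l (1-l)) (pair2 x z)) (gamma 2 (prob2 l (1-l)) (pair2 y z))"
  have H: "dist x y \<le> 4 * C / (l * N) + D / l" if "2 \<le> N" for N :: nat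
    unfolding D_def by (rule cancel_N[OF xyz l that C])
  have "dist x y \<le> D / l"
  proof (rule ccontr)
    assume "\<not> dist x y \<le> D / l"
    then have dpos: "0 < dist x y - D / l" by simp
    define de where "de = dist x y - D / l"
    have de: "0 < de" using dpos de_def by simp
    obtain N :: nat where N: "4*C/(l*de) + 2 < N" using reals_Archimedean2 by blast
    have "0 \<le> 4*C/(l*de)" using C(1) l de by simp
    then have "2 < real N" using N by linarith
    then have N2: "2 \<le> N" by simp
    have lde: "0 < l*de" using l de by simp
    have "4*C/(l*de) < N" using N by linarith
    then have "4*C < N*(l*de)" by (simp add: pos_divide_less_eq[OF lde])
    then have "4*C < de * (l*N)" by (simp add: algebra_simps)
    moreover have lN: "0 < l*N" using l N2 by simp
    ultimately have "4*C/(l*N) < de" by (simp add: pos_divide_less_eq[OF lN])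
    with H[OF N2] show False unfolding de_def by linarith
  qed
  then show ?thesis using l unfolding D_def by (simp add: pos_le_divide_eq mult.commute)
qed

end


lemma Prob_le1: assumes f: "f \<in> Prob n" and i: "i < n" shows "f i \<le> 1"
proof -
  have nn: "\<And>i. i < n \<Longrightarrow> 0 \<le> f i" and s: "(\<Sum>i<n. f i) = 1" using f by (auto simp: Prob_def)
  have "f i \<le> (\<Sum>j<n. f j)" using i nn by (intro member_le_sum) auto
  then show ?thesis using s by simp
qed

lemma Prob_eq: "Prob n = PiE UNIV (\<lambda>i. if i < n then {0..1} else {0::real}) \<inter> {f. (\<Sum>i<n. f i) = 1}"
proof (rule set_eqI, rule iffI)
  fix f assume f: "f \<in> Prob n"
  then show "f \<in> PiE UNIV (\<lambda>i. if i < n then {0..1} else {0::real}) \<inter> {f. (\<Sum>i<n. f i) = 1}"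
    using Prob_le1[OF f] by (auto simp: PiE_def Pi_def Prob_def not_less)
next
  fix f :: "nat \<Rightarrow> real" assume "f \<in> PiE UNIV (\<lambda>i. if i < n then {0..1} else {0::real}) \<inter> {f. (\<Sum>i<n. f i) = 1}"
  then have H: "\<And>i. f i \<in> (if i < n then {0..1} else {0::real})" and s: "(\<Sum>i<n. f i) = 1"
    by (auto simp: PiE_iff)
  show "f \<in> Prob n" unfolding Prob_def
  proof (intro CollectI conjI allI impI s)
    fix i assume "i < n" then show "0 \<le> f i" using H[of i] by simp
  next
    fix i assume "n \<le> i" then show "f i = 0" using H[of i] by simp
  qed
qed

lemma compact_Prob: "compact (Prob n)"
proof -
  have "compactin (product_topology (\<lambda>i. euclidean) UNIV) (PiE UNIV (\<lambda>i. if i < n then {0..1} else {0::real}))"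
    by (subst compactin_PiE) auto
  then have c: "compact (PiE UNIV (\<lambda>i. if i < n then {0..1} else {0::real}))"
    by (simp add: euclidean_product_topology)
  have "closed {f :: nat \<Rightarrow> real. (\<Sum>i<n. f i) = 1}"
    by (intro closed_Collect_eq continuous_intros continuous_on_product_coordinates)
  with c show ?thesis unfolding Prob_eq by (rule compact_Int_closed)
qed

lemma tendsto_coord: "(f \<longlongrightarrow> (g :: nat \<Rightarrow> real)) F \<Longrightarrow> ((\<lambda>j. f j i) \<longlongrightarrow> g i) F"
proof -
  assume "(f \<longlongrightarrow> g) F"
  moreover have "isCont (\<lambda>h :: nat \<Rightarrow> real. h i) g"
    by (metis continuous_on_eq_continuous_at open_UNIV UNIV_I continuous_on_product_coordinates)
  ultimately show ?thesis by (rule isCont_tendsto_compose[rotated])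
qed

lemma tendsto_l1dist: "(f \<longlongrightarrow> (g :: nat \<Rightarrow> real)) F \<Longrightarrow> ((\<lambda>j. l1dist n (f j) g) \<longlongrightarrow> 0) F"
proof -
  assume a: "(f \<longlongrightarrow> g) F"
  have "((\<lambda>j. \<Sum>i<n. \<bar>f j i - g i\<bar>) \<longlongrightarrow> (\<Sum>i<n. \<bar>g i - g i\<bar>)) F"
    by (intro tendsto_intros tendsto_coord[OF a])
  then show ?thesis by (simp add: l1dist_def)
qed

lemma separable_union_compact:
  fixes K :: "nat \<Rightarrow> 'a::metric_space set"
  assumes "\<And>k. compact (K k)"
  shows "separable_space (top_of_set (\<Union>k. K k))"
proof -
  have "\<exists>F. finite F \<and> F \<subseteq> K k \<and> K k \<subseteq> (\<Union>c\<in>F. ball c (1 / real (Suc m)))" for k m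
  proof -
    have "K k \<subseteq> (\<Union>c\<in>K k. ball c (1 / real (Suc m)))" by auto
    then show ?thesis using compactE_image[OF assms[of k], where C="K k" and f="\<lambda>c. ball c (1 / real (Suc m))"]
      by (metis open_ball)
  qed
  then obtain F where F: "\<And>k m. finite (F k m)" "\<And>k m. F k m \<subseteq> K k"
    "\<And>k m. K k \<subseteq> (\<Union>c\<in>F k m. ball c (1 / real (Suc m)))" by metis
  define C where "C = (\<Union>k. \<Union>m. F k m)"
  have cC: "countable C" unfolding C_def
    using F(1) by (simp add: countable_finite)
  have CS: "C \<subseteq> (\<Union>k. K k)" unfolding C_def using F(2) by blast
  have "(\<Union>k. K k) \<subseteq> closure C"
  proof
    fix x assume "x \<in> (\<Union>k. K k)"
    then obtain k where xk: "x \<in> K k" by blast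
    show "x \<in> closure C" unfolding closure_approachable
    proof (intro allI impI)
      fix e :: real assume e: "0 < e"
      obtain m where m: "inverse (real (Suc m)) < e" using reals_Archimedean[OF e] by blast
      obtain c where c: "c \<in> F k m" "x \<in> ball c (1 / real (Suc m))" using F(3)[of k m] xk by blast
      have "c \<in> C" using c unfolding C_def by blast
      moreover have "dist c x < e" using c m by (simp add: inverse_eq_divide)
      ultimately show "\<exists>y\<in>C. dist y x < e" by blast
    qed
  qed
  moreover have "(\<Union>k. K k) \<inter> C = C" using CS by blast
  ultimately have "top_of_set (\<Union>k. K k) closure_of C = (\<Union>k. K k)"
    unfolding closure_of_subtopology euclidean_closure_of by auto
  then show ?thesis unfolding separable_space_def using cC CS
    by (intro exI[of _ C]) simp
qed



lemma tendsto_by_bound: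
  fixes g :: "nat \<Rightarrow> 'a::metric_space"
  assumes "b \<longlonglongrightarrow> 0" "\<And>j. dist (g j) L \<le> b j"
  shows "g \<longlonglongrightarrow> L"
proof (rule metric_tendsto_imp_tendsto[OF assms(1)])
  show "\<forall>\<^sub>F j in sequentially. dist (g j) L \<le> dist (b j) 0"
    by (intro always_eventually allI) (metis assms(2) abs_ge_self dist_real_def diff_zero order_trans)
qed

lemma compactK:
  fixes X :: "'a::metric_space set" and a :: real
  assumes cl: "convex_like X gamma" and cX: "complete X" and xs: "xs \<in> Xpow X n" and a: "0 < a"
  shows "compact {x \<in> X. \<exists>\<mu>\<in>Prob n. \<exists>\<nu>\<in>Prob n. \<exists>t. a \<le> t \<and> t \<le> 1 \<and>
            gamma 2 (prob2 t (1-t)) (pair2 x (gamma n \<mu> xs)) = gamma n \<nu> xs}" (is "compact ?S")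
proof -
  obtain C where C: "C \<ge> 0" "\<And>n \<mu> \<mu>' x. \<mu> \<in> Prob n \<Longrightarrow> \<mu>' \<in> Prob n \<Longrightarrow> x \<in> Xpow X n \<Longrightarrow>
         dist (gamma n \<mu> x) (gamma n \<mu>' x) \<le> C * l1dist n \<mu> \<mu>'" using ax_C[OF cl] by blast
  define Q where "Q = Prob n \<times> Prob n \<times> {a..1}"
  have cQ: "compact Q" unfolding Q_def by (intro compact_Times compact_Prob compact_Icc)
  show ?thesis unfolding compact_eq_seq_compact_metric seq_compact_def
  proof (intro allI impI)
    fix f :: "nat \<Rightarrow> 'a" assume f: "\<forall>j. f j \<in> ?S"
    have "\<forall>j. \<exists>q. q \<in> Q \<and> gamma 2 (prob2 (snd (snd q)) (1 - snd (snd q))) (pair2 (f j) (gamma n (fst q) xs))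
                 = gamma n (fst (snd q)) xs"
    proof
      fix j
      from f obtain \<mu> \<nu> t where "\<mu> \<in> Prob n" "\<nu> \<in> Prob n" "a \<le> t" "t \<le> 1"
        "gamma 2 (prob2 t (1-t)) (pair2 (f j) (gamma n \<mu> xs)) = gamma n \<nu> xs" by blast
      then show "\<exists>q. q \<in> Q \<and> gamma 2 (prob2 (snd (snd q)) (1 - snd (snd q))) (pair2 (f j) (gamma n (fst q) xs))
                 = gamma n (fst (snd q)) xs"
        by (intro exI[of _ "(\<mu>, \<nu>, t)"]) (simp add: Q_def)
    qed
    then obtain q :: "nat \<Rightarrow> (nat \<Rightarrow> real) \<times> (nat \<Rightarrow> real) \<times> real" where q: "\<And>j. q j \<in> Q"
      "\<And>j. gamma 2 (prob2 (snd (snd (q j))) (1 - snd (snd (q j)))) (pair2 (f j) (gamma n (fst (q j)) xs))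
                 = gamma n (fst (snd (q j))) xs" by metis
    obtain q0 r where q0: "q0 \<in> Q" and r: "strict_mono r" and lim: "(q \<circ> r) \<longlonglongrightarrow> q0"
      using seq_compactE[OF compact_imp_seq_compact[OF cQ], of q] q(1) by blast
    define \<mu>0 where "\<mu>0 = fst q0"
    define \<nu>0 where "\<nu>0 = fst (snd q0)"
    define t0 where "t0 = snd (snd q0)"
    define M where "M j = fst (q (r j))" for j
    define V where "V j = fst (snd (q (r j)))" for j
    define T where "T j = snd (snd (q (r j)))" for j
    define x where "x j = f (r j)" for j
    have lim': "(\<lambda>j. q (r j)) \<longlonglongrightarrow> q0" using lim by (simp add: o_def)
    have Mlim: "M \<longlonglongrightarrow> \<mu>0" unfolding M_def \<mu>0_def by (rule tendsto_fst[OF lim'])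
    have Vlim: "V \<longlonglongrightarrow> \<nu>0" unfolding V_def \<nu>0_def by (rule tendsto_fst[OF tendsto_snd[OF lim']])
    have Tlim: "T \<longlonglongrightarrow> t0" unfolding T_def t0_def by (rule tendsto_snd[OF tendsto_snd[OF lim']])
    have \<mu>0: "\<mu>0 \<in> Prob n" and \<nu>0: "\<nu>0 \<in> Prob n" and t0: "a \<le> t0" "t0 \<le> 1"
      using q0 unfolding Q_def \<mu>0_def \<nu>0_def t0_def by auto
    have M: "M j \<in> Prob n" and V: "V j \<in> Prob n" and T: "a \<le> T j" "T j \<le> 1" for j
      using q(1)[of "r j"] unfolding Q_def M_def V_def T_def by auto
    have xX: "x j \<in> X" for j using f unfolding x_def by blast
    define y0 where "y0 = gamma n \<mu>0 xs"
    define z0 where "z0 = gamma n \<nu>0 xs"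
    define y where "y j = gamma n (M j) xs" for j
    define z where "z j = gamma n (V j) xs" for j
    have y0X: "y0 \<in> X" unfolding y0_def by (rule ax_in[OF cl \<mu>0 xs])
    have yX: "y j \<in> X" for j unfolding y_def by (rule ax_in[OF cl M xs])
    have eqj: "gamma 2 (prob2 (T j) (1 - T j)) (pair2 (x j) (y j)) = z j" for j
      using q(2)[of "r j"] unfolding T_def x_def y_def z_def M_def V_def .
    have ylim: "y \<longlonglongrightarrow> y0"
    proof (rule tendsto_by_bound)
      show "(\<lambda>j. C * l1dist n (M j) \<mu>0) \<longlonglongrightarrow> 0"
        using tendsto_mult[OF tendsto_const[of C] tendsto_l1dist[OF Mlim, of n]] by simp
      show "dist (y j) y0 \<le> C * l1dist n (M j) \<mu>0" for j
        unfolding y_def y0_def by (rule C(2)[OF M \<mu>0 xs])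
    qed
    have zlim: "z \<longlonglongrightarrow> z0"
    proof (rule tendsto_by_bound)
      show "(\<lambda>j. C * l1dist n (V j) \<nu>0) \<longlonglongrightarrow> 0"
        using tendsto_mult[OF tendsto_const[of C] tendsto_l1dist[OF Vlim, of n]] by simp
      show "dist (z j) z0 \<le> C * l1dist n (V j) \<nu>0" for j
        unfolding z_def z0_def by (rule C(2)[OF V \<nu>0 xs])
    qed
    define w where "w j = gamma 2 (prob2 t0 (1-t0)) (pair2 (x j) y0)" for j
    have P0: "prob2 t0 (1-t0) \<in> Prob 2" using t0 a by (intro prob2_in) auto
    have PT: "prob2 (T j) (1 - T j) \<in> Prob 2" for j using T[of j] a by (intro prob2_in) auto
    have wlim: "w \<longlonglongrightarrow> z0"
    proof (rule tendsto_by_bound)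
      show "(\<lambda>j. (1-t0) * dist y0 (y j) + C * (2 * \<bar>t0 - T j\<bar>) + dist (z j) z0) \<longlonglongrightarrow> 0"
      proof -
        have "(\<lambda>j. dist y0 (y j)) \<longlonglongrightarrow> 0" using tendsto_dist[OF tendsto_const[of y0] ylim] by simp
        moreover have "(\<lambda>j. \<bar>t0 - T j\<bar>) \<longlonglongrightarrow> 0"
          using tendsto_rabs[OF tendsto_diff[OF tendsto_const[of t0] Tlim]] by simp
        moreover have "(\<lambda>j. dist (z j) z0) \<longlonglongrightarrow> 0" using tendsto_dist[OF zlim tendsto_const[of z0]] by simp
        ultimately have "(\<lambda>j. (1-t0) * dist y0 (y j) + C * (2 * \<bar>t0 - T j\<bar>) + dist (z j) z0)
            \<longlonglongrightarrow> (1-t0) * 0 + C * (2 * 0) + 0"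
          by (intro tendsto_intros)
        then show ?thesis by simp
      qed
      show "dist (w j) z0 \<le> (1-t0) * dist y0 (y j) + C * (2 * \<bar>t0 - T j\<bar>) + dist (z j) z0" for j
      proof -
        define u where "u = gamma 2 (prob2 t0 (1-t0)) (pair2 (x j) (y j))"
        have "dist (w j) u \<le> (\<Sum>i<2. prob2 t0 (1-t0) i * dist (pair2 (x j) y0 i) (pair2 (x j) (y j) i))"
          unfolding w_def u_def by (rule ax_lip2[OF cl P0 pair2_in[OF xX y0X] pair2_in[OF xX yX]])
        also have "\<dots> = (1-t0) * dist y0 (y j)" by (simp add: lessThan2 prob2_def pair2_def)
        finally have d1: "dist (w j) u \<le> (1-t0) * dist y0 (y j)" .
        have "dist u (z j) \<le> C * l1dist 2 (prob2 t0 (1-t0)) (prob2 (T j) (1 - T j))"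
          unfolding u_def eqj[of j, symmetric] by (rule C(2)[OF P0 PT pair2_in[OF xX yX]])
        also have "\<dots> = C * (2 * \<bar>t0 - T j\<bar>)"
        proof -
          have "l1dist 2 (prob2 t0 (1-t0)) (prob2 (T j) (1 - T j)) = \<bar>t0 - T j\<bar> + \<bar>(1-t0) - (1 - T j)\<bar>"
            by (simp add: l1dist_def lessThan2 prob2_def)
          also have "\<dots> = 2 * \<bar>t0 - T j\<bar>"
          proof -
            have e: "(1-t0) - (1 - T j) = -(t0 - T j)" by simp
            show ?thesis unfolding e abs_minus_cancel by simp
          qed
          finally show ?thesis by simp
        qed
        finally have d2: "dist u (z j) \<le> C * (2 * \<bar>t0 - T j\<bar>)" .
        have "dist (w j) z0 \<le> dist (w j) u + dist u (z j) + dist (z j) z0"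
          using dist_triangle[of "w j" z0 u] dist_triangle[of u z0 "z j"] by linarith
        then show ?thesis using d1 d2 by linarith
      qed
    qed
    have t0pos: "0 < t0" using a t0 by linarith
    have "Cauchy x"
    proof (rule metric_CauchyI)
      fix e :: real assume e: "0 < e"
      have "Cauchy w" using wlim by (rule LIMSEQ_imp_Cauchy)
      from metric_CauchyD[OF this] obtain N where N: "\<forall>m\<ge>N. \<forall>k\<ge>N. dist (w m) (w k) < e * t0"
        using e t0pos by (meson mult_pos_pos)
      show "\<exists>N. \<forall>m\<ge>N. \<forall>k\<ge>N. dist (x m) (x k) < e"
      proof (intro exI allI impI)
        fix m k assume "N \<le> m" "N \<le> k"
        then have "dist (w m) (w k) < e * t0" using N by blast
        moreover have "t0 * dist (x m) (x k) \<le> dist (w m) (w k)"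
          unfolding w_def by (rule cancel[OF cl xX xX y0X t0pos t0(2)])
        ultimately have "t0 * dist (x m) (x k) < t0 * e" by (simp add: mult.commute)
        then show "dist (x m) (x k) < e" using t0pos by simp
      qed
    qed
    then obtain x0 where x0: "x0 \<in> X" and xlim: "x \<longlonglongrightarrow> x0"
      using completeE[OF cX] xX by blast
    have wlim2: "w \<longlonglongrightarrow> gamma 2 (prob2 t0 (1-t0)) (pair2 x0 y0)"
    proof (rule tendsto_by_bound)
      show "(\<lambda>j. t0 * dist (x j) x0) \<longlonglongrightarrow> 0"
        using tendsto_mult[OF tendsto_const[of t0] tendsto_dist[OF xlim tendsto_const[of x0]]] by simp
      show "dist (w j) (gamma 2 (prob2 t0 (1-t0)) (pair2 x0 y0)) \<le> t0 * dist (x j) x0" for j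
      proof -
        have "dist (w j) (gamma 2 (prob2 t0 (1-t0)) (pair2 x0 y0))
           \<le> (\<Sum>i<2. prob2 t0 (1-t0) i * dist (pair2 (x j) y0 i) (pair2 x0 y0 i))"
          unfolding w_def by (rule ax_lip2[OF cl P0 pair2_in[OF xX y0X] pair2_in[OF x0 y0X]])
        also have "\<dots> = t0 * dist (x j) x0" by (simp add: lessThan2 prob2_def pair2_def)
        finally show ?thesis .
      qed
    qed
    have "gamma 2 (prob2 t0 (1-t0)) (pair2 x0 y0) = z0" using LIMSEQ_unique[OF wlim2 wlim] .
    then have "x0 \<in> ?S" using x0 \<mu>0 \<nu>0 t0 unfolding y0_def z0_def by blast
    moreover have "(f \<circ> r) \<longlonglongrightarrow> x0" using xlim unfolding x_def by (simp add: o_def)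
    ultimately show "\<exists>l\<in>?S. \<exists>r. strict_mono r \<and> (f \<circ> r) \<longlonglongrightarrow> l" using r by blast
  qed
qed


theorem lemma2p6:
  fixes X :: "'a::metric_space set"
    and gamma :: "nat \<Rightarrow> (nat \<Rightarrow> real) \<Rightarrow> (nat \<Rightarrow> 'a) \<Rightarrow> 'a"
    and n :: nat and xs :: "nat \<Rightarrow> 'a"
  assumes "bounded X" and "complete X"
    and "convex_like X gamma"
    and "xs \<in> Xpow X n" and "inj_on xs {..<n}"
  shows "sigma_compact (cl_plane X gamma n xs)
         \<and> separable_space (top_of_set (cl_plane X gamma n xs))"
proof -
  define K where "K k = {x \<in> X. \<exists>\<mu>\<in>Prob n. \<exists>\<nu>\<in>Prob n. \<exists>t. 1 / real (Suc k) \<le> t \<and> t \<le> 1 \<and>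
            gamma 2 (prob2 t (1-t)) (pair2 x (gamma n \<mu> xs)) = gamma n \<nu> xs}" for k
  have Kc: "compact (K k)" for k unfolding K_def by (rule compactK[OF assms(3) assms(2) assms(4)]) simp
  have eq: "cl_plane X gamma n xs = (\<Union>k. K k)"
  proof (rule set_eqI, rule iffI)
    fix x assume "x \<in> cl_plane X gamma n xs"
    then obtain \<mu> \<nu> t where x: "x \<in> X" and m: "\<mu> \<in> Prob n" and v: "\<nu> \<in> Prob n" and t: "0 < t" "t \<le> 1"
      and e: "gamma 2 (prob2 t (1-t)) (pair2 x (gamma n \<mu> xs)) = gamma n \<nu> xs"
      unfolding cl_plane_def cl_conv_def by blast
    obtain k where "inverse (real (Suc k)) < t" using reals_Archimedean[OF t(1)] by blast
    then have k: "1 / real (Suc k) \<le> t" by (simp add: inverse_eq_divide)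
    have "x \<in> K k" unfolding K_def using x m v t(2) e k by blast
    then show "x \<in> (\<Union>k. K k)" by blast
  next
    fix x assume "x \<in> (\<Union>k. K k)"
    then obtain k \<mu> \<nu> t where x: "x \<in> X" and m: "\<mu> \<in> Prob n" and v: "\<nu> \<in> Prob n"
      and t: "1 / real (Suc k) \<le> t" "t \<le> 1"
      and e: "gamma 2 (prob2 t (1-t)) (pair2 x (gamma n \<mu> xs)) = gamma n \<nu> xs"
      unfolding K_def by blast
    have "0 < 1 / real (Suc k)" by simp
    then have t0: "0 < t" using t(1) by linarith
    show "x \<in> cl_plane X gamma n xs" unfolding cl_plane_def cl_conv_def using x m v t(2) t0 e by blast
  qed
  have "separable_space (top_of_set (\<Union>k. K k))" by (rule separable_union_compact[OF Kc])
  moreover have "\<exists>K' :: nat \<Rightarrow> 'a set. (\<forall>k. compact (K' k)) \<and> (\<Union>k. K k) = (\<Union>k. K' k)"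
  proof
    show "(\<forall>k. compact (K k)) \<and> (\<Union>k. K k) = (\<Union>k. K k)" using Kc by simp
  qed
  ultimately show ?thesis unfolding eq sigma_compact_def by (rule conjI[rotated])
qed

end
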